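(* There exists $c>0$ such that the following holds. Let $t\geq 2$ be an integer and let $\omega:2^{[t]}\to\mathbb{R}_{\geq 0}$ be a balanced weight function with $\omega(2^{[t]})\geq 9/10$. Then either (i) $\omega(\emptyset)\geq 1/10$ and $\omega([t])\geq 1/10$, or (ii) there exist a positive integer $s$ and pairwise disjoint families $\mathcal{A}_1,\dots,\mathcal{A}_s\subset 2^{[t]}$ such that $\sum_{i=1}^s\omega(\mathcal{A}_i)^c\geq 1$, and for all $1\leq i<j\leq s$, every $A\in\mathcal{A}_i$ is incomparable (with respect to inclusion) to every $B\in\mathcal{A}_j$.
   Context: $2^{[t]}$ is the family of all subsets of $[t]=\{1,\dots,t\}$, ordered by inclusion. For a weight function $\omega:2^{[t]}\to\mathbb{R}_{\geq0}$ and $\mathcal{A}\subset 2^{[t]}$, $\omega(\mathcal{A})=\sum_{A\in\mathcal{A}}\omega(A)$. For $i\in[t]$ let $F^-_t(i)=\{A\subset[t]: i\notin A\}$ and $F^+_t(i)=\{A\subset[t]: i\in A\}$. $\omega$ is balanced if $\omega(F^-_t(i))\leq 1/2$ and $\omega(F^+_t(i))\leq 1/2$ for every $i\in[t]$. *)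

theory Defs
  imports Complex_Main
begin

definition wt :: "(nat set \<Rightarrow> real) \<Rightarrow> nat set set \<Rightarrow> real" where
  "wt \<omega> \<A> = (\<Sum>A\<in>\<A>. \<omega> A)"

definition Fminus :: "nat \<Rightarrow> nat \<Rightarrow> nat set set" where
  "Fminus t i = {A. A \<subseteq> {1..t} \<and> i \<notin> A}"

definition Fplus :: "nat \<Rightarrow> nat \<Rightarrow> nat set set" where
  "Fplus t i = {A. A \<subseteq> {1..t} \<and> i \<in> A}"

definition balanced :: "nat \<Rightarrow> (nat set \<Rightarrow> real) \<Rightarrow> bool" where
  "balanced t \<omega> \<longleftrightarrow> (\<forall>i\<in>{1..t}. wt \<omega> (Fminus t i) \<le> 1/2 \<and> wt \<omega> (Fplus t i) \<le> 1/2)"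

end

theory Submission
  imports Defs
begin

lemma wt_union_disj:
  assumes "finite X" "finite Y" "X \<inter> Y = {}"
  shows "wt \<omega> (X \<union> Y) = wt \<omega> X + wt \<omega> Y"
  unfolding wt_def using assms by (simp add: sum.union_disjoint)

lemma powr_bound:
  fixes m :: nat and w :: real
  assumes m2: "m \<ge> 2" and w: "w \<ge> 3/(10*(real m - 1)) - 3/(10*real m)"
  shows "w powr (1/4) \<ge> 1 / real m"
proof -
  have m1: "real m - 1 > 0" using m2 by simp
  have mpos: "real m > 0" using m2 by simp
  have eq: "3/(10*(real m - 1)) - 3/(10*real m) = 3 / (10 * real m * (real m - 1))"
    using m1 mpos by (simp add: field_simps)
  have sq: "real m * real m \<ge> 4"
  proof -
    have "real m \<ge> 2" using m2 by simp
    then show ?thesis by (metis mult_mono' dual_order.trans le_numeral_extra(1) mult_2 numeral_Bit0 one_add_one order_refl zero_le_numeral)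
  qed
  have A: "10 * real m * (real m - 1) \<le> 3 * (real m ^ 4)"
  proof -
    have "real m ^ 4 = (real m * real m) * (real m * real m)" by (simp add: power4_eq_xxxx)
    also have "\<dots> \<ge> 4 * (real m * real m)" using sq by (intro mult_right_mono) auto
    finally have "real m ^ 4 \<ge> 4 * (real m * real m)" .
    moreover have "10 * real m * (real m - 1) \<le> 10 * (real m * real m)" using mpos by (simp add: algebra_simps)
    moreover have "real m * real m \<ge> 0" by simp
    ultimately show ?thesis by linarith
  qed
  have D: "10 * real m * (real m - 1) > 0" using m1 mpos by simp
  have "(1 / real m) ^ 4 \<le> 3 / (10 * real m * (real m - 1))"
  proof -
    have "(1 / real m) ^ 4 = 1 / (real m ^ 4)" by (simp add: power_divide)
    also have "\<dots> \<le> 3 / (10 * real m * (real m - 1))"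
      using A D mpos by (simp add: divide_simps)
    finally show ?thesis .
  qed
  then have w4: "(1 / real m) powr 4 \<le> w" using w eq mpos
    by (simp add: powr_realpow)
  have "((1 / real m) powr 4) powr (1/4) \<le> w powr (1/4)"
    by (rule powr_mono2) (use w4 mpos in auto)
  moreover have "((1 / real m) powr 4) powr (1/4) = 1 / real m"
    using mpos by (simp only: powr_powr) simp
  ultimately show ?thesis by simp
qed

lemma families_conclusion:
  fixes \<omega> :: "nat set \<Rightarrow> real" and M0 :: "nat set" and pat :: "nat \<Rightarrow> nat set"
  assumes fin: "finite M0" and cm: "card M0 = m" and m2: "m \<ge> 2"
    and e: "bij_betw e {1..m} M0"
    and inc: "\<And>x y. x \<in> M0 \<Longrightarrow> y \<in> M0 \<Longrightarrow> pat x \<subseteq> pat y \<Longrightarrow> x = y"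
    and wts: "\<And>x. x \<in> M0 \<Longrightarrow> wt \<omega> {A \<in> Pow {1..t}. A \<inter> M0 = pat x}
                 \<ge> 3/(10*(real m - 1)) - 3/(10*real m)"
  shows "\<exists>(s::nat) (\<A>::nat \<Rightarrow> nat set set). s \<ge> 1 \<and>
          (\<forall>i\<in>{1..s}. \<A> i \<subseteq> Pow {1..t}) \<and>
          (\<forall>i\<in>{1..s}. \<forall>j\<in>{1..s}. i \<noteq> j \<longrightarrow> \<A> i \<inter> \<A> j = {}) \<and>
          (\<Sum>i=1..s. wt \<omega> (\<A> i) powr (1/4)) \<ge> 1 \<and>
          (\<forall>i\<in>{1..s}. \<forall>j\<in>{1..s}. i < j \<longrightarrow>
             (\<forall>A\<in>\<A> i. \<forall>B\<in>\<A> j. \<not> A \<subseteq> B \<and> \<not> B \<subseteq> A))"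
proof -
  define \<A> where "\<A> i = {A \<in> Pow {1..t}. A \<inter> M0 = pat (e i)}" for i
  have inj: "inj_on e {1..m}" and img: "\<And>i. i \<in> {1..m} \<Longrightarrow> e i \<in> M0"
    using e by (auto simp: bij_betw_def)
  have neq: "e i \<noteq> e j" if "i \<in> {1..m}" "j \<in> {1..m}" "i \<noteq> j" for i j
    using inj that by (meson inj_on_eq_iff)
  have disj: "\<forall>i\<in>{1..m}. \<forall>j\<in>{1..m}. i \<noteq> j \<longrightarrow> \<A> i \<inter> \<A> j = {}"
  proof (intro ballI impI)
    fix i j assume ij: "i \<in> {1..m}" "j \<in> {1..m}" "i \<noteq> j"
    show "\<A> i \<inter> \<A> j = {}"
    proof (rule ccontr)
      assume "\<A> i \<inter> \<A> j \<noteq> {}"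
      then obtain A where "A \<in> \<A> i" "A \<in> \<A> j" by blast
      then have "pat (e i) = pat (e j)" unfolding \<A>_def by auto
      then have "e i = e j" using inc[OF img[OF ij(1)] img[OF ij(2)]] by simp
      then show False using neq ij by blast
    qed
  qed
  have incomp: "\<forall>i\<in>{1..m}. \<forall>j\<in>{1..m}. i < j \<longrightarrow>
             (\<forall>A\<in>\<A> i. \<forall>B\<in>\<A> j. \<not> A \<subseteq> B \<and> \<not> B \<subseteq> A)"
  proof (intro ballI impI conjI notI)
    fix i j A B assume ij: "i \<in> {1..m}" "j \<in> {1..m}" "i < j" and A: "A \<in> \<A> i" and B: "B \<in> \<A> j"
    have pA: "A \<inter> M0 = pat (e i)" and pB: "B \<inter> M0 = pat (e j)" using A B unfolding \<A>_def by auto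
    have ne: "e i \<noteq> e j" using neq ij by simp
    { assume "A \<subseteq> B"
      then have "pat (e i) \<subseteq> pat (e j)" using pA pB by blast
      then show False using inc[OF img[OF ij(1)] img[OF ij(2)]] ne by simp }
    { assume "B \<subseteq> A"
      then have "pat (e j) \<subseteq> pat (e i)" using pA pB by blast
      then show False using inc[OF img[OF ij(2)] img[OF ij(1)]] ne by simp }
  qed
  have sum: "(\<Sum>i=1..m. wt \<omega> (\<A> i) powr (1/4)) \<ge> 1"
  proof -
    have "(\<Sum>i=1..m. 1 / real m) \<le> (\<Sum>i=1..m. wt \<omega> (\<A> i) powr (1/4))"
    proof (rule sum_mono)
      fix i assume i: "i \<in> {1..m}"
      show "1 / real m \<le> wt \<omega> (\<A> i) powr (1/4)"
        using powr_bound[OF m2 wts[OF img[OF i]]] unfolding \<A>_def by simp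
    qed
    moreover have "(\<Sum>i=1..m. 1 / real m) = 1" using m2 by simp
    ultimately show ?thesis by simp
  qed
  have sub: "\<forall>i\<in>{1..m}. \<A> i \<subseteq> Pow {1..t}" unfolding \<A>_def by auto
  show ?thesis
    apply (rule exI[of _ m], rule exI[of _ \<A>])
    apply (intro conjI)
    using m2 apply simp
    using sub apply assumption
    using disj apply assumption
    using sum apply assumption
    using incomp apply assumption
    done
qed


theorem lemma4p2:
  "\<exists>c::real. c > 0 \<and>
    (\<forall>(t::nat) (\<omega>::nat set \<Rightarrow> real).
      t \<ge> 2 \<longrightarrow> (\<forall>A\<in>Pow {1..t}. \<omega> A \<ge> 0) \<longrightarrow> balanced t \<omega> \<longrightarrow>
      wt \<omega> (Pow {1..t}) \<ge> 9/10 \<longrightarrow>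
      ((\<omega> {} \<ge> 1/10 \<and> \<omega> {1..t} \<ge> 1/10) \<or>
       (\<exists>(s::nat) (\<A>::nat \<Rightarrow> nat set set). s \<ge> 1 \<and>
          (\<forall>i\<in>{1..s}. \<A> i \<subseteq> Pow {1..t}) \<and>
          (\<forall>i\<in>{1..s}. \<forall>j\<in>{1..s}. i \<noteq> j \<longrightarrow> \<A> i \<inter> \<A> j = {}) \<and>
          (\<Sum>i=1..s. wt \<omega> (\<A> i) powr c) \<ge> 1 \<and>
          (\<forall>i\<in>{1..s}. \<forall>j\<in>{1..s}. i < j \<longrightarrow>
             (\<forall>A\<in>\<A> i. \<forall>B\<in>\<A> j. \<not> A \<subseteq> B \<and> \<not> B \<subseteq> A)))))"
proof (rule exI[of _ "1/4"], intro conjI allI impI)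
  show "(1/4::real) > 0" by simp
next
  fix t :: nat and \<omega> :: "nat set \<Rightarrow> real"
  assume t2: "t \<ge> 2" and nn: "\<forall>A\<in>Pow {1..t}. \<omega> A \<ge> 0" and bal: "balanced t \<omega>"
    and tot: "wt \<omega> (Pow {1..t}) \<ge> 9/10"
  let ?C = "\<exists>(s::nat) (\<A>::nat \<Rightarrow> nat set set). s \<ge> 1 \<and>
          (\<forall>i\<in>{1..s}. \<A> i \<subseteq> Pow {1..t}) \<and>
          (\<forall>i\<in>{1..s}. \<forall>j\<in>{1..s}. i \<noteq> j \<longrightarrow> \<A> i \<inter> \<A> j = {}) \<and>
          (\<Sum>i=1..s. wt \<omega> (\<A> i) powr (1/4)) \<ge> 1 \<and>
          (\<forall>i\<in>{1..s}. \<forall>j\<in>{1..s}. i < j \<longrightarrow>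
             (\<forall>A\<in>\<A> i. \<forall>B\<in>\<A> j. \<not> A \<subseteq> B \<and> \<not> B \<subseteq> A))"
  show "(\<omega> {} \<ge> 1/10 \<and> \<omega> {1..t} \<ge> 1/10) \<or> ?C"
  proof (cases "\<omega> {} \<ge> 1/10 \<and> \<omega> {1..t} \<ge> 1/10")
    case True
    then show ?thesis by (rule disjI1)
  next
    case False
    note ni = False
    define a where "a M = wt \<omega> {A \<in> Pow {1..t}. A \<inter> M = {}}" for M :: "nat set"
    define b where "b M = wt \<omega> {A \<in> Pow {1..t}. M \<subseteq> A}" for M :: "nat set"
    define \<theta> where "\<theta> k = 1/10 + 3/(10 * real k)" for k :: nat
    define P where "P M \<longleftrightarrow> M \<subseteq> {1..t} \<and> M \<noteq> {} \<and> (a M < \<theta> (card M) \<or> b M < \<theta> (card M))"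
      for M :: "nat set"
    have finP: "finite X" if "X \<subseteq> Pow {1..t}" for X :: "nat set set"
      using that finite_subset by blast
    have a_all: "a {1..t} = \<omega> {}"
    proof -
      have "{A \<in> Pow {1..t}. A \<inter> {1..t} = {}} = {{}}" by auto
      then show ?thesis unfolding a_def wt_def by simp
    qed
    have b_all: "b {1..t} = \<omega> {1..t}"
    proof -
      have "{A \<in> Pow {1..t}. {1..t} \<subseteq> A} = {{1..t}}" by auto
      then show ?thesis unfolding b_def wt_def by simp
    qed
    have th_t: "\<theta> t \<ge> 1/10" unfolding \<theta>_def using t2 by simp
    have P_all: "P {1..t}"
      unfolding P_def using t2 ni a_all b_all th_t by auto
    define n where "n = (LEAST n. \<exists>M. P M \<and> card M = n)"
    obtain M0 where PM0: "P M0" and cM0: "card M0 = n"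
      using LeastI_ex[of "\<lambda>n. \<exists>M. P M \<and> card M = n"] P_all unfolding n_def by blast
    have minimal: "\<not> P M" if "card M < n" for M
      using not_less_Least[of "card M" "\<lambda>n. \<exists>M. P M \<and> card M = n"] that unfolding n_def by blast
    have M0sub: "M0 \<subseteq> {1..t}" and M0ne: "M0 \<noteq> {}" using PM0 unfolding P_def by auto
    have finM0: "finite M0" using M0sub finite_subset by blast
    have single: "a {y} \<ge> 2/5 \<and> b {y} \<ge> 2/5" if y: "y \<in> {1..t}" for y
    proof -
      have e1: "{A \<in> Pow {1..t}. A \<inter> {y} = {}} = Fminus t y" unfolding Fminus_def by auto
      have e2: "{A \<in> Pow {1..t}. {y} \<subseteq> A} = Fplus t y" unfolding Fplus_def by auto
      have un: "Pow {1..t} = Fminus t y \<union> Fplus t y" unfolding Fminus_def Fplus_def by auto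
      have dj: "Fminus t y \<inter> Fplus t y = {}" unfolding Fminus_def Fplus_def by auto
      have f1: "finite (Fminus t y)" "finite (Fplus t y)"
        by (rule finP, auto simp: Fminus_def Fplus_def)+
      have "wt \<omega> (Pow {1..t}) = wt \<omega> (Fminus t y) + wt \<omega> (Fplus t y)"
        using un wt_union_disj[OF f1 dj] by simp
      moreover have "wt \<omega> (Fminus t y) \<le> 1/2" "wt \<omega> (Fplus t y) \<le> 1/2"
        using bal y unfolding balanced_def by auto
      ultimately show ?thesis unfolding a_def b_def e1 e2 using tot by linarith
    qed
    have n2: "n \<ge> 2"
    proof -
      have "n \<noteq> 0" using cM0 finM0 M0ne by auto
      moreover have "n \<noteq> 1"
      proof
        assume "n = 1"
        then obtain y where My: "M0 = {y}" using cM0 card_1_singletonE by blast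
        then have "y \<in> {1..t}" using M0sub by auto
        then have "a M0 \<ge> 2/5" "b M0 \<ge> 2/5" using single My by auto
        moreover have "\<theta> (card M0) = 2/5" using My unfolding \<theta>_def by simp
        ultimately show False using PM0 unfolding P_def by auto
      qed
      ultimately show ?thesis by linarith
    qed
    have sub_ok: "a (M0 - {x}) \<ge> \<theta> (n - 1) \<and> b (M0 - {x}) \<ge> \<theta> (n - 1)" if x: "x \<in> M0" for x
    proof -
      have c: "card (M0 - {x}) = n - 1" using cM0 x finM0 by simp
      have "M0 - {x} \<noteq> {}"
      proof
        assume "M0 - {x} = {}"
        then have "M0 = {x}" using x by blast
        then show False using cM0 n2 by simp
      qed
      moreover have "M0 - {x} \<subseteq> {1..t}" using M0sub by auto
      moreover have "\<not> P (M0 - {x})" using minimal c n2 by simp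
      ultimately show ?thesis unfolding P_def c by auto
    qed
    have thd: "\<theta> (n - 1) - \<theta> n = 3/(10*(real n - 1)) - 3/(10*real n)"
      unfolding \<theta>_def using n2 by (simp add: of_nat_diff)
    obtain e where e: "bij_betw e {1..n} M0"
      using ex_bij_betw_nat_finite_1[OF finM0] cM0 by auto
    have fin1: "finite {A \<in> Pow {1..t}. Q A}" for Q by (rule finP) auto
    from PM0 have "a M0 < \<theta> n \<or> b M0 < \<theta> n" unfolding P_def cM0 by simp
    then have ?C
    proof
      assume aM0: "a M0 < \<theta> n"
      show ?C
      proof (rule families_conclusion[OF finM0 cM0 n2 e, where pat = "\<lambda>x. {x}"])
        show "x = y" if "x \<in> M0" "y \<in> M0" "{x} \<subseteq> {y}" for x y using that by simp
      next
        fix x assume x: "x \<in> M0"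
        have eq: "{A \<in> Pow {1..t}. A \<inter> (M0 - {x}) = {}} =
                  {A \<in> Pow {1..t}. A \<inter> M0 = {}} \<union> {A \<in> Pow {1..t}. A \<inter> M0 = {x}}"
          using x by auto
        have dj: "{A \<in> Pow {1..t}. A \<inter> M0 = {}} \<inter> {A \<in> Pow {1..t}. A \<inter> M0 = {x}} = {}"
          by auto
        have "a (M0 - {x}) = a M0 + wt \<omega> {A \<in> Pow {1..t}. A \<inter> M0 = {x}}"
          unfolding a_def eq by (rule wt_union_disj[OF fin1 fin1 dj])
        then show "wt \<omega> {A \<in> Pow {1..t}. A \<inter> M0 = {x}} \<ge> 3/(10*(real n - 1)) - 3/(10*real n)"
          using sub_ok[OF x] aM0 thd by linarith
      qed
    next
      assume bM0: "b M0 < \<theta> n"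
      show ?C
      proof (rule families_conclusion[OF finM0 cM0 n2 e, where pat = "\<lambda>x. M0 - {x}"])
        show "x = y" if "x \<in> M0" "y \<in> M0" "M0 - {x} \<subseteq> M0 - {y}" for x y using that by blast
      next
        fix x assume x: "x \<in> M0"
        have eq: "{A \<in> Pow {1..t}. M0 - {x} \<subseteq> A} =
                  {A \<in> Pow {1..t}. M0 \<subseteq> A} \<union> {A \<in> Pow {1..t}. A \<inter> M0 = M0 - {x}}"
          using x by auto
        have dj: "{A \<in> Pow {1..t}. M0 \<subseteq> A} \<inter> {A \<in> Pow {1..t}. A \<inter> M0 = M0 - {x}} = {}"
          using x by auto
        have "b (M0 - {x}) = b M0 + wt \<omega> {A \<in> Pow {1..t}. A \<inter> M0 = M0 - {x}}"
          unfolding b_def eq by (rule wt_union_disj[OF fin1 fin1 dj])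
        then show "wt \<omega> {A \<in> Pow {1..t}. A \<inter> M0 = M0 - {x}} \<ge> 3/(10*(real n - 1)) - 3/(10*real n)"
          using sub_ok[OF x] bM0 thd by linarith
      qed
    qed
    then show ?thesis by (rule disjI2)
  qed
qed

end
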